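(* Let $\pi=(\pi_n^{n+1}\colon(X_{n+1},f_{n+1})\to(X_n,f_n))_{n\ge1}$ be an inverse sequence of equivariant maps satisfying MLC(1), with each $(X_n,f_n)$ a transitive subshift of finite type, and let $(X,f)=\lim_\pi(X_n,f_n)$ with a metric $d$ compatible with its topology. Let $D_\ast=(D_n)_{n\ge1}\in\mathcal{D}_\pi$ be such that $(\pi_n^{n+1}|_{D_{n+1}}\colon D_{n+1}\to D_n)_{n\ge1}$ satisfies MLC(1), and let $D=[D_\ast]=\{x=(x_n)_{n\ge1}\in X:x_n\in D_n\ \forall n\}$. Then for any $\epsilon>0$ there is $\delta>0$ such that every $\delta$-pseudo orbit $(x^{(i)})_{i\ge0}$ of $f$ with $x^{(0)}\in D$ is $\epsilon$-shadowed by some $x\in D$.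
   Context: Equivariant means $\pi_n^{n+1}$ continuous with $f_n\circ\pi_n^{n+1}=\pi_n^{n+1}\circ f_{n+1}$; $\pi_n^m=\pi_n^{n+1}\circ\cdots\circ\pi_{m-1}^m$. $X=\{(x_n)\in\prod_n X_n:\pi_n^{n+1}(x_{n+1})=x_n\ \forall n\}$ (product topology), $f((x_n))=(f_n(x_n))$. An inverse sequence $(p_n\colon Z_{n+1}\to Z_n)$ satisfies MLC(1) if $p_n(Z_{n+1})=p_n(p_{n+1}(Z_{n+2}))$ for all $n$. A subshift of finite type is $(Z,\sigma|_Z)$ with $\sigma$ the shift $(x_i)_{i\ge1}\mapsto(x_{i+1})_{i\ge1}$ on $S^{\mathbb N}$, $S$ finite, and $Z=\{x:(x_i,\dots,x_{i+N})\in F\ \forall i\}$ for some $N>0$, $F\subset S^{N+1}$; transitive means for nonempty open $U,V$ some $k>0$ has $\sigma^k(U)\cap V\neq\emptyset$. For a chain transitive map $g$ of a compact metric space: a $\delta$-chain is $(y_i)_{i=0}^k$, $k>0$, with $d(g(y_i),y_{i+1})\le\delta$, a $\delta$-cycle of length $k$ if $y_0=y_k$; $m(g,\delta)$ is the gcd of lengths of $\delta$-cycles; $y\sim_{g,\delta}z$ iff a $\delta$-chain from $y$ to $z$ of length divisible by $m(g,\delta)$ exists; $y\sim_g z$ iff $y\sim_{g,\delta}z$ for all $\delta$; $\mathcal{D}(g)$ is the set of its equivalence classes. $\mathcal{D}_\pi=\{(D_n)\in\prod_n\mathcal{D}(f_n):\pi_n^{n+1}(D_{n+1})\subset D_n\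 \forall n\}$. A $\delta$-pseudo orbit of $f$ is $(x^{(i)})_{i\ge0}$ with $d(f(x^{(i)}),x^{(i+1)})\le\delta$ for all $i$; it is $\epsilon$-shadowed by $x$ if $d(f^i(x),x^{(i)})\le\epsilon$ for all $i\ge0$. *)

theory Defs
  imports "HOL-Analysis.Analysis"
begin

text \<open>One-sided sequences over an alphabet 'a, indexed by nat (index 0 plays the
role of index 1 in the paper). The full shift carries the product of discrete topologies.\<close>

definition seqtop :: "(nat \<Rightarrow> 'a) topology" where
  "seqtop = product_topology (\<lambda>_. discrete_topology UNIV) UNIV"

definition shtop :: "(nat \<Rightarrow> 'a) set \<Rightarrow> (nat \<Rightarrow> 'a) topology" where
  "shtop Z = subtopology seqtop Z"

definition shift :: "(nat \<Rightarrow> 'a) \<Rightarrow> (nat \<Rightarrow> 'a)" where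
  "shift x = (\<lambda>i. x (Suc i))"

definition sft_set :: "'a set \<Rightarrow> nat \<Rightarrow> 'a list set \<Rightarrow> (nat \<Rightarrow> 'a) set" where
  "sft_set S N F = {x. (\<forall>i. x i \<in> S) \<and> (\<forall>i. map x [i..<i+N+1] \<in> F)}"

definition is_sft :: "(nat \<Rightarrow> 'a) set \<Rightarrow> bool" where
  "is_sft Z \<longleftrightarrow> (\<exists>S N F. finite S \<and> N > 0 \<and>
      F \<subseteq> {w. length w = N + 1 \<and> set w \<subseteq> S} \<and> Z = sft_set S N F)"

definition transitive_sft :: "(nat \<Rightarrow> 'a) set \<Rightarrow> bool" where
  "transitive_sft Z \<longleftrightarrow> is_sft Z \<and>
     (\<forall>U V. openin (shtop Z) U \<and> openin (shtop Z) V \<and> U \<noteq> {} \<and> V \<noteq> {} \<longrightarrow>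
        (\<exists>k>0. (shift ^^ k) ` U \<inter> V \<noteq> {}))"

text \<open>Standard compatible metric on the full shift (used to define chain classes of
the factor systems; the chain classes of a compact system do not depend on the
compatible metric).\<close>
definition sdist :: "(nat \<Rightarrow> 'a) \<Rightarrow> (nat \<Rightarrow> 'a) \<Rightarrow> real" where
  "sdist x y = (if x = y then 0 else (1/2) ^ (LEAST i. x i \<noteq> y i))"

definition is_chain :: "('b \<Rightarrow> 'b) \<Rightarrow> 'b set \<Rightarrow> ('b \<Rightarrow> 'b \<Rightarrow> real) \<Rightarrow> real
     \<Rightarrow> (nat \<Rightarrow> 'b) \<Rightarrow> nat \<Rightarrow> bool" where
  "is_chain g M d \<delta> y k \<longleftrightarrow> k > 0 \<and> (\<forall>i\<le>k. y i \<in> M) \<and>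
      (\<forall>i<k. d (g (y i)) (y (Suc i)) \<le> \<delta>)"

definition chain_m :: "('b \<Rightarrow> 'b) \<Rightarrow> 'b set \<Rightarrow> ('b \<Rightarrow> 'b \<Rightarrow> real) \<Rightarrow> real \<Rightarrow> nat" where
  "chain_m g M d \<delta> = Gcd {k. \<exists>y. is_chain g M d \<delta> y k \<and> y 0 = y k}"

definition chain_rel_delta :: "('b \<Rightarrow> 'b) \<Rightarrow> 'b set \<Rightarrow> ('b \<Rightarrow> 'b \<Rightarrow> real) \<Rightarrow> real
     \<Rightarrow> 'b \<Rightarrow> 'b \<Rightarrow> bool" where
  "chain_rel_delta g M d \<delta> a b \<longleftrightarrow>
     (\<exists>y k. is_chain g M d \<delta> y k \<and> y 0 = a \<and> y k = b \<and> chain_m g M d \<delta> dvd k)"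

definition chain_rel :: "('b \<Rightarrow> 'b) \<Rightarrow> 'b set \<Rightarrow> ('b \<Rightarrow> 'b \<Rightarrow> real) \<Rightarrow> 'b \<Rightarrow> 'b \<Rightarrow> bool" where
  "chain_rel g M d a b \<longleftrightarrow> (\<forall>\<delta>>0. chain_rel_delta g M d \<delta> a b)"

definition chain_classes :: "('b \<Rightarrow> 'b) \<Rightarrow> 'b set \<Rightarrow> ('b \<Rightarrow> 'b \<Rightarrow> real) \<Rightarrow> 'b set set" where
  "chain_classes g M d = (\<lambda>a. {b \<in> M. chain_rel g M d a b}) ` M"

definition MLC1 :: "(nat \<Rightarrow> 'c \<Rightarrow> 'c) \<Rightarrow> (nat \<Rightarrow> 'c set) \<Rightarrow> bool" where
  "MLC1 p Z \<longleftrightarrow> (\<forall>n. p n ` Z (Suc n) = p n ` (p (Suc n) ` Z (Suc (Suc n))))"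

definition inv_lim :: "(nat \<Rightarrow> 'c \<Rightarrow> 'c) \<Rightarrow> (nat \<Rightarrow> 'c set) \<Rightarrow> (nat \<Rightarrow> 'c) set" where
  "inv_lim p Z = {x. (\<forall>n. x n \<in> Z n) \<and> (\<forall>n. p n (x (Suc n)) = x n)}"

definition lim_top :: "(nat \<Rightarrow> (nat \<Rightarrow> 'a) \<Rightarrow> (nat \<Rightarrow> 'a)) \<Rightarrow> (nat \<Rightarrow> (nat \<Rightarrow> 'a) set)
     \<Rightarrow> (nat \<Rightarrow> nat \<Rightarrow> 'a) topology" where
  "lim_top p Z = subtopology (product_topology (\<lambda>n. shtop (Z n)) UNIV) (inv_lim p Z)"

definition lim_map :: "(nat \<Rightarrow> nat \<Rightarrow> 'a) \<Rightarrow> (nat \<Rightarrow> nat \<Rightarrow> 'a)" where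
  "lim_map x = (\<lambda>n. shift (x n))"

end

theory Submission
  imports Defs
begin


definition agr :: "nat \<Rightarrow> (nat \<Rightarrow> 'a) \<Rightarrow> (nat \<Rightarrow> 'a) \<Rightarrow> bool" where
  "agr M u v \<longleftrightarrow> (\<forall>t<M. u t = v t)"

lemma topspace_seqtop [simp]: "topspace seqtop = UNIV"
  by (simp add: seqtop_def)

lemma topspace_shtop [simp]: "topspace (shtop Z) = Z"
  by (simp add: shtop_def)

lemma open_cyl: "openin seqtop {y. agr M y x}"
proof -
  have eq: "{y. agr M y x} = PiE UNIV (\<lambda>t. if t < M then {x t} else UNIV)"
    by (auto simp: agr_def PiE_def extensional_def split: if_splits)
  have fin: "finite {t. (if t < M then {x t} else UNIV) \<noteq> topspace (discrete_topology UNIV)}"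
    by (rule finite_subset[of _ "{..<M}"]) auto
  show ?thesis unfolding eq seqtop_def
    by (rule product_topology_basis) (use fin in auto)
qed

lemma open_cylE:
  assumes "openin seqtop W" "x \<in> W"
  shows "\<exists>M. {y. agr M y x} \<subseteq> W"
proof -
  obtain X where X: "x \<in> PiE UNIV X" "\<forall>i. openin (discrete_topology UNIV) (X i)"
     "finite {i. X i \<noteq> topspace (discrete_topology UNIV)}" "PiE UNIV X \<subseteq> W"
    using product_topology_open_contains_basis[OF assms[unfolded seqtop_def]] by blast
  have "finite {i. X i \<noteq> UNIV}" using X(3) by simp
  then obtain M where M: "{i. X i \<noteq> UNIV} \<subseteq> {..<M}"
    using finite_nat_bounded by blast
  have "{y. agr M y x} \<subseteq> PiE UNIV X"
  proof
    fix y assume "y \<in> {y. agr M y x}"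
    then have ag: "agr M y x" by simp
    have "y i \<in> X i" for i
    proof (cases "X i = UNIV")
      case False
      then have "i < M" using M by auto
      then have "y i = x i" using ag by (auto simp: agr_def)
      then show ?thesis using X(1) by auto
    qed simp
    then have "\<forall>i. y i \<in> X i" by blast
    then show "y \<in> PiE UNIV X" by (auto simp: PiE_def extensional_def)
  qed
  then show ?thesis using X(4) by blast
qed

lemma agr_trans: "agr M a b \<Longrightarrow> agr M b c \<Longrightarrow> agr M a c"
  by (auto simp: agr_def)
lemma agr_sym: "agr M a b \<Longrightarrow> agr M b a"
  by (auto simp: agr_def)
lemma agr_mono: "agr M a b \<Longrightarrow> N \<le> M \<Longrightarrow> agr N a b"
  by (auto simp: agr_def)

lemma shift_sft: "x \<in> sft_set S N F \<Longrightarrow> shift x \<in> sft_set S N F"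
proof -
  assume x: "x \<in> sft_set S N F"
  have "map (shift x) [i..<i+N+1] = map x [Suc i..<Suc i+N+1]" for i
  proof -
    have "map (shift x) [i..<i+N+1] = map x (map Suc [i..<i+N+1])"
      unfolding map_map shift_def comp_def by (rule refl)
    also have "\<dots> = map x [Suc i..<Suc i+N+1]"
      by (simp only: map_Suc_upt add_Suc)
    finally show ?thesis .
  qed
  moreover have "map x [Suc i..<Suc i+N+1] \<in> F" for i using x by (simp only: sft_set_def mem_Collect_eq)
  moreover have "shift x i \<in> S" for i using x by (simp add: sft_set_def shift_def)
  ultimately show ?thesis by (simp add: sft_set_def)
qed

lemma funpow_shift: "(shift ^^ k) w = (\<lambda>t. w (t + k))"
  by (induction k) (auto simp: shift_def)

lemma funpow_shift_sft: "x \<in> sft_set S N F \<Longrightarrow> (shift ^^ k) x \<in> sft_set S N F"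
  by (induction k) (auto intro: shift_sft)

lemma sft_closed: "closedin seqtop (sft_set S N F)"
proof -
  have "openin seqtop (UNIV - sft_set S N F)"
  proof (subst openin_subopen, intro ballI)
    fix x assume "x \<in> UNIV - sft_set S N F"
    then have "(\<exists>i. x i \<notin> S) \<or> (\<exists>i. map x [i..<i+N+1] \<notin> F)"
      by (auto simp: sft_set_def)
    then obtain M where M: "\<forall>y. agr M y x \<longrightarrow> y \<notin> sft_set S N F"
    proof
      assume "\<exists>i. x i \<notin> S"
      then obtain i where "x i \<notin> S" by blast
      then have "\<forall>y. agr (Suc i) y x \<longrightarrow> y \<notin> sft_set S N F"
      proof (intro allI impI)
        fix y assume "agr (Suc i) y x"
        then have "y i = x i" by (simp add: agr_def)
        then show "y \<notin> sft_set S N F" using \<open>x i \<notin> S\<close> unfolding sft_set_def by (metis (mono_tags, lifting) mem_Collect_eq)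
      qed
      then show ?thesis using that by blast
    next
      assume "\<exists>i. map x [i..<i+N+1] \<notin> F"
      then obtain i where i: "map x [i..<i+N+1] \<notin> F" by blast
      have "\<forall>y. agr (i+N+1) y x \<longrightarrow> y \<notin> sft_set S N F"
      proof (intro allI impI)
        fix y assume "agr (i+N+1) y x"
        then have "map y [i..<i+N+1] = map x [i..<i+N+1]"
          by (auto simp: agr_def)
        then show "y \<notin> sft_set S N F" using i unfolding sft_set_def by (metis (mono_tags, lifting) mem_Collect_eq)
      qed
      then show ?thesis using that by blast
    qed
    show "\<exists>T. openin seqtop T \<and> x \<in> T \<and> T \<subseteq> UNIV - sft_set S N F"
      by (rule exI[of _ "{y. agr M y x}"]) (use M open_cyl in \<open>auto simp: agr_def\<close>)
  qed
  then show ?thesis by (simp add: closedin_def)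
qed

lemma sft_compact: "finite S \<Longrightarrow> compactin seqtop (sft_set S N F)"
proof -
  assume S: "finite S"
  have "compactin seqtop (PiE UNIV (\<lambda>_. S))"
    unfolding seqtop_def compactin_PiE using S by (simp add: compactin_discrete_topology)
  moreover have "sft_set S N F \<subseteq> PiE UNIV (\<lambda>_. S)"
    by (auto simp: sft_set_def)
  ultimately show ?thesis using closed_compactin sft_closed by blast
qed

lemma sdist_self [simp]: "sdist a a = 0"
  by (simp add: sdist_def)

lemma sdist_le_iff:
  assumes d: "0 < \<delta>" and J: "J = (LEAST j. (1/2::real)^j \<le> \<delta>)"
  shows "sdist a b \<le> \<delta> \<longleftrightarrow> agr J a b"
proof (cases "a = b")
  case True then show ?thesis using d by (simp add: agr_def)
next
  case False
  define i where "i = (LEAST i. a i \<noteq> b i)"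
  have ex: "\<exists>j. (1/2::real)^j \<le> \<delta>"
    using real_arch_pow_inv[OF d, of "1/2"] by (auto intro: less_imp_le)
  have Jle: "(1/2::real)^J \<le> \<delta>" unfolding J by (rule LeastI_ex[OF ex])
  have ab: "\<exists>i. a i \<noteq> b i" using False by auto
  have ai: "a i \<noteq> b i" unfolding i_def by (rule LeastI_ex[OF ab])
  have "sdist a b = (1/2)^i" using False by (simp add: sdist_def i_def)
  moreover have "(1/2::real)^i \<le> \<delta> \<longleftrightarrow> J \<le> i"
  proof
    assume "(1/2::real)^i \<le> \<delta>" then show "J \<le> i" unfolding J by (rule Least_le)
  next
    assume "J \<le> i"
    then have "(1/2::real)^i \<le> (1/2)^J" by (rule power_decreasing) auto
    then show "(1/2::real)^i \<le> \<delta>" using Jle by linarith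
  qed
  moreover have "J \<le> i \<longleftrightarrow> agr J a b"
  proof
    assume Ji: "J \<le> i"
    show "agr J a b" unfolding agr_def
    proof (intro allI impI)
      fix t assume "t < J"
      then have "t < (LEAST i. a i \<noteq> b i)" using Ji i_def by simp
      then show "a t = b t" using not_less_Least by blast
    qed
  next
    assume "agr J a b" then show "J \<le> i" using ai by (metis agr_def not_le)
  qed
  ultimately show ?thesis by simp
qed



lemma chain_G:
  assumes st: "\<forall>u<c. \<forall>q<J. y (Suc u) q = y u (Suc q)"
  shows "s + r \<le> c \<Longrightarrow> q + r \<le> J \<Longrightarrow> y (s+r) q = y s (q+r)"
proof (induction r arbitrary: q)
  case 0 then show ?case by simp
next
  case (Suc r)
  have "y (s + Suc r) q = y (Suc (s + r)) q" by simp
  also have "\<dots> = y (s + r) (Suc q)" using st Suc.prems by auto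
  also have "\<dots> = y s (Suc q + r)" using Suc.IH[of "Suc q"] Suc.prems by auto
  finally show ?case by simp
qed

lemma chain_concat:
  assumes "is_chain g M d \<delta> y k" "is_chain g M d \<delta> y' k'" "y k = y' 0"
  shows "is_chain g M d \<delta> (\<lambda>i. if i \<le> k then y i else y' (i-k)) (k+k')"
proof -
  have a: "k > 0" "\<forall>i\<le>k. y i \<in> M" "\<forall>i<k. d (g (y i)) (y (Suc i)) \<le> \<delta>"
    using assms(1) by (auto simp: is_chain_def)
  have b: "k' > 0" "\<forall>i\<le>k'. y' i \<in> M" "\<forall>i<k'. d (g (y' i)) (y' (Suc i)) \<le> \<delta>"
    using assms(2) by (auto simp: is_chain_def)
  show ?thesis unfolding is_chain_def
  proof (intro conjI allI impI)
    show "0 < k + k'" using a by simp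
  next
    fix i assume "i \<le> k + k'"
    then show "(if i \<le> k then y i else y' (i - k)) \<in> M" using a b by auto
  next
    fix i assume i: "i < k + k'"
    show "d (g (if i \<le> k then y i else y' (i - k))) (if Suc i \<le> k then y (Suc i) else y' (Suc i - k)) \<le> \<delta>"
    proof (cases "Suc i \<le> k")
      case True then show ?thesis using a by auto
    next
      case False
      then have e: "(if i \<le> k then y i else y' (i - k)) = y' (i - k)" using assms(3)
        by (cases "i = k") auto
      have "Suc i - k = Suc (i - k)" using False by auto
      then show ?thesis using False e b i by auto
    qed
  qed
qed

lemma chain_repeat:
  assumes "is_chain g M d \<delta> y L" "y 0 = y L" "n > 0"
  shows "is_chain g M d \<delta> (\<lambda>i. y (i mod L)) (n*L)"
proof -
  have a: "L > 0" "\<forall>i\<le>L. y i \<in> M" "\<forall>i<L. d (g (y i)) (y (Suc i)) \<le> \<delta>"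
    using assms(1) by (auto simp: is_chain_def)
  show ?thesis unfolding is_chain_def
  proof (intro conjI allI impI)
    show "0 < n * L" using a assms(3) by simp
  next
    fix i show "y (i mod L) \<in> M" using a by (simp add: less_imp_le)
  next
    fix i
    have im: "i mod L < L" using a by simp
    show "d (g (y (i mod L))) (y (Suc i mod L)) \<le> \<delta>"
    proof (cases "Suc (i mod L) = L")
      case True
      then have "Suc i mod L = 0" by (simp add: mod_Suc)
      then show ?thesis using a(3) im True assms(2) by (metis)
    next
      case False
      then have "Suc i mod L = Suc (i mod L)" by (simp add: mod_Suc)
      then show ?thesis using a(3) im by simp
    qed
  qed
qed

lemma chain_mono: "is_chain g M d \<delta> y k \<Longrightarrow> \<delta> \<le> \<delta>' \<Longrightarrow> is_chain g M d \<delta>' y k"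
  by (force simp: is_chain_def)

lemma chain_m_dvd: "is_chain g M d \<delta> y k \<Longrightarrow> y 0 = y k \<Longrightarrow> chain_m g M d \<delta> dvd k"
  unfolding chain_m_def by (rule Gcd_dvd) blast

lemma chain_m_mono: "\<delta> \<le> \<delta>' \<Longrightarrow> chain_m g M d \<delta>' dvd chain_m g M d \<delta>"
  unfolding chain_m_def
proof (rule Gcd_greatest)
  fix b assume "\<delta> \<le> \<delta>'" "b \<in> {k. \<exists>y. is_chain g M d \<delta> y k \<and> y 0 = y k}"
  then have "b \<in> {k. \<exists>y. is_chain g M d \<delta>' y k \<and> y 0 = y k}" using chain_mono by blast
  then show "Gcd {k. \<exists>y. is_chain g M d \<delta>' y k \<and> y 0 = y k} dvd b" by (rule Gcd_dvd)
qed

lemma chain_step_agr: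
  fixes y :: "nat \<Rightarrow> nat \<Rightarrow> 'a"
  assumes hJ: "\<forall>a b. sdist a b \<le> \<delta> \<longleftrightarrow> agr J a (b::nat\<Rightarrow>'a)"
    and ch: "is_chain shift X sdist \<delta> y c"
  shows "\<forall>u<c. \<forall>q<J. y (Suc u) q = y u (Suc q)"
proof (intro allI impI)
  fix u q assume "u < c" "q < J"
  then have "sdist (shift (y u)) (y (Suc u)) \<le> \<delta>" using ch by (auto simp: is_chain_def)
  then have "agr J (shift (y u)) (y (Suc u))" using hJ by blast
  then show "y (Suc u) q = y u (Suc q)" using \<open>q < J\<close> by (auto simp: agr_def shift_def)
qed

lemma chain_modify:
  fixes y :: "nat \<Rightarrow> nat \<Rightarrow> 'a"
  assumes X: "X = sft_set S N F" and hJ: "\<forall>a b. sdist a b \<le> \<delta> \<longleftrightarrow> agr J a (b::nat\<Rightarrow>'a)"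
    and NJ: "N \<le> J" and cJ: "J < c" and dpos: "0 < \<delta>"
    and ch: "is_chain shift X sdist \<delta> y c" and yc: "y c = x"
    and z: "z \<in> X" and zx: "agr N z x"
  shows "\<exists>y'. is_chain shift X sdist \<delta> y' c \<and> y' 0 = y 0 \<and> y' c = z"
proof -
  have st: "\<forall>u<c. \<forall>q<J. y (Suc u) q = y u (Suc q)" by (rule chain_step_agr[OF hJ ch])
  note G = chain_G[OF st]
  have yX: "\<forall>i\<le>c. y i \<in> X" using ch by (auto simp: is_chain_def)
  define W where "W s = (if s < c then y s 0 else z (s - c))" for s
  have Wy: "W (s + r) = y s r" if "s < c" "r \<le> N" for s r
  proof (cases "s + r < c")
    case True
    then have "W (s + r) = y (s + r) 0" by (simp add: W_def)
    also have "\<dots> = y s (0 + r)" by (rule G) (use True that NJ in auto)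
    finally show ?thesis by simp
  next
    case False
    define e where "e = c - s"
    have e: "s + e = c" "e \<le> r" "e > 0" using that False by (auto simp: e_def)
    have "s + r - c = r - e" using e by arith
    then have "W (s + r) = z (r - e)" using False e by (simp add: W_def)
    also have "\<dots> = x (r - e)" using zx e that by (auto simp: agr_def)
    also have "\<dots> = y (s + e) (r - e)" using yc e by simp
    also have "\<dots> = y s (r - e + e)" by (rule G) (use e that NJ in auto)
    finally show ?thesis using e by simp
  qed
  have WX: "W \<in> X"
    unfolding X sft_set_def
  proof (intro CollectI conjI allI)
    fix s show "W s \<in> S"
      using yX z unfolding X sft_set_def W_def by (cases "s < c") auto
  next
    fix s show "map W [s..<s+N+1] \<in> F"
    proof (cases "s < c")
      case True
      have "map W [s..<s+N+1] = map (y s) [0..<0+N+1]"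
        by (rule nth_equalityI) (use Wy[of s] True in \<open>auto simp del: upt_Suc simp: add.commute less_Suc_eq_le\<close>)
      moreover have "y s \<in> sft_set S N F" using yX True X by auto
      ultimately show ?thesis unfolding sft_set_def by (metis (mono_tags, lifting) mem_Collect_eq)
    next
      case False
      have "map W [s..<s+N+1] = map z [s-c..<s-c+N+1]"
        by (rule nth_equalityI) (use False in \<open>auto simp del: upt_Suc simp: W_def\<close>)
      moreover have "z \<in> sft_set S N F" using z X by auto
      ultimately show ?thesis unfolding sft_set_def by (metis (mono_tags, lifting) mem_Collect_eq)
    qed
  qed
  define y' where "y' i = (if i = 0 then y 0 else (\<lambda>t. W (t + i)))" for i
  have WiX: "(\<lambda>t. W (t + i)) \<in> X" for i
    using funpow_shift_sft[of W S N F i] WX X by (simp add: funpow_shift)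
  have "is_chain shift X sdist \<delta> y' c"
    unfolding is_chain_def
  proof (intro conjI allI impI)
    show "0 < c" using cJ by simp
  next
    fix i show "y' i \<in> X" using yX WiX by (simp add: y'_def)
  next
    fix i assume i: "i < c"
    show "sdist (shift (y' i)) (y' (Suc i)) \<le> \<delta>"
    proof (cases "i = 0")
      case True
      have "agr J (shift (y 0)) (\<lambda>t. W (t + 1))"
        unfolding agr_def
      proof (intro allI impI)
        fix t assume t: "t < J"
        have "W (t + 1) = W (0 + Suc t)" by simp
        also have "\<dots> = y (0 + Suc t) 0" using t cJ by (simp add: W_def)
        also have "\<dots> = y 0 (0 + Suc t)" by (rule G) (use t cJ in auto)
        finally show "shift (y 0) t = W (t + 1)" by (simp add: shift_def)
      qed
      then show ?thesis using True hJ by (simp add: y'_def)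
    next
      case False
      have "shift (y' i) = y' (Suc i)" using False by (simp add: y'_def shift_def)
      then show ?thesis using dpos by simp
    qed
  qed
  moreover have "y' c = z" using cJ by (simp add: y'_def W_def)
  ultimately show ?thesis by (auto simp: y'_def)
qed

lemma sft_cycle:
  fixes X :: "(nat \<Rightarrow> 'a) set"
  assumes tr: "transitive_sft X" and X: "X = sft_set S N F" and x0: "x0 \<in> X"
    and hJ: "\<forall>a b. sdist a b \<le> \<delta> \<longleftrightarrow> agr J a (b::nat\<Rightarrow>'a)"
  shows "\<exists>y L. is_chain shift X sdist \<delta> y L \<and> y 0 = x0 \<and> y L = x0"
proof -
  define U where "U = X \<inter> {y. agr (Suc J) y x0}"
  define V where "V = X \<inter> {y. agr J y x0}"
  have oU: "openin (shtop X) U" unfolding U_def shtop_def by (rule openin_subtopology_Int2[OF open_cyl])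
  have oV: "openin (shtop X) V" unfolding V_def shtop_def by (rule openin_subtopology_Int2[OF open_cyl])
  have ne: "U \<noteq> {}" "V \<noteq> {}" using x0 by (auto simp: U_def V_def agr_def)
  obtain k where k: "k > 0" "(shift ^^ k) ` U \<inter> V \<noteq> {}"
    using tr oU oV ne unfolding transitive_sft_def by blast
  then obtain w where w: "w \<in> U" "(shift ^^ k) w \<in> V" by blast
  have wX: "w \<in> X" using w by (simp add: U_def)
  define y where "y i = (if i = 0 \<or> i = k then x0 else (shift ^^ i) w)" for i
  have "is_chain shift X sdist \<delta> y k"
    unfolding is_chain_def
  proof (intro conjI allI impI)
    show "0 < k" by fact
  next
    fix i show "y i \<in> X" using x0 funpow_shift_sft[of w S N F i] wX X by (simp add: y_def)
  next
    fix i assume i: "i < k"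
    have A: "agr J (shift (y i)) ((shift ^^ Suc i) w)"
    proof (cases "i = 0")
      case True
      then show ?thesis using w(1) i by (auto simp: y_def U_def agr_def shift_def)
    next
      case False
      then show ?thesis using i by (auto simp: y_def agr_def)
    qed
    have B: "agr J ((shift ^^ Suc i) w) (y (Suc i))"
    proof (cases "Suc i = k")
      case True
      then show ?thesis using w(2) by (auto simp: y_def V_def)
    next
      case False
      then show ?thesis by (auto simp: y_def agr_def)
    qed
    show "sdist (shift (y i)) (y (Suc i)) \<le> \<delta>" using agr_trans[OF A B] hJ by blast
  qed
  moreover have "y 0 = x0" "y k = x0" by (auto simp: y_def)
  ultimately show ?thesis by blast
qed

lemma chain_class_open:
  fixes X :: "(nat \<Rightarrow> 'a) set"
  assumes tr: "transitive_sft X" and X: "X = sft_set S N F"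
    and D: "D \<in> chain_classes shift X sdist" and x0: "x0 \<in> D" and z: "z \<in> X"
    and zx: "agr N z x0"
  shows "z \<in> D"
proof -
  obtain a where a: "a \<in> X" "D = {b \<in> X. chain_rel shift X sdist a b}"
    using D by (auto simp: chain_classes_def)
  have ax0: "chain_rel shift X sdist a x0" and x0X: "x0 \<in> X" using x0 a by auto
  have "chain_rel shift X sdist a z"
    unfolding chain_rel_def
  proof (intro allI impI)
    fix \<delta> :: real assume dpos: "\<delta> > 0"
    define \<delta>' where "\<delta>' = min \<delta> ((1/2)^N)"
    have d'pos: "\<delta>' > 0" using dpos by (simp add: \<delta>'_def)
    define J where "J = (LEAST j. (1/2::real)^j \<le> \<delta>')"
    have hJ: "\<forall>a b. sdist a b \<le> \<delta>' \<longleftrightarrow> agr J a (b::nat\<Rightarrow>'a)"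
      using sdist_le_iff[OF d'pos J_def] by blast
    have ex: "\<exists>j. (1/2::real)^j \<le> \<delta>'"
      using real_arch_pow_inv[OF d'pos, of "1/2"] by (auto intro: less_imp_le)
    have Jle: "(1/2::real)^J \<le> \<delta>'" unfolding J_def by (rule LeastI_ex[OF ex])
    have NJ: "N \<le> J"
    proof (rule ccontr)
      assume "\<not> N \<le> J"
      then have "(1/2::real)^N < (1/2)^J" by (intro power_strict_decreasing) auto
      then show False using Jle by (simp add: \<delta>'_def)
    qed
    obtain y1 k1 where y1: "is_chain shift X sdist \<delta>' y1 k1" "y1 0 = a" "y1 k1 = x0"
      "chain_m shift X sdist \<delta>' dvd k1"
      using ax0 d'pos unfolding chain_rel_def chain_rel_delta_def by blast
    obtain y2 L where y2: "is_chain shift X sdist \<delta>' y2 L" "y2 0 = x0" "y2 L = x0"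
      using sft_cycle[OF tr X x0X hJ] by blast
    have Lpos: "L > 0" using y2 by (simp add: is_chain_def)
    have mL: "chain_m shift X sdist \<delta>' dvd L" using chain_m_dvd[OF y2(1)] y2 by simp
    define y3 where "y3 i = y2 (i mod L)" for i
    have y3: "is_chain shift X sdist \<delta>' y3 (Suc J * L)"
      unfolding y3_def by (rule chain_repeat[OF y2(1)]) (use y2 in auto)
    define c where "c = k1 + Suc J * L"
    define y4 where "y4 i = (if i \<le> k1 then y1 i else y3 (i - k1))" for i
    have y4: "is_chain shift X sdist \<delta>' y4 c"
      unfolding y4_def c_def by (rule chain_concat[OF y1(1) y3]) (simp add: y3_def y1 y2)
    have SJL: "Suc J \<le> Suc J * L" using Lpos by (metis One_nat_def Suc_leI mult_le_mono2 nat_mult_1_right)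
    have cJ: "J < c" using SJL by (simp add: c_def)
    have y4c: "y4 c = x0" using Lpos by (simp add: y4_def c_def y3_def y2)
    obtain y5 where y5: "is_chain shift X sdist \<delta>' y5 c" "y5 0 = y4 0" "y5 c = z"
      using chain_modify[OF X hJ NJ cJ d'pos y4 y4c z zx] by blast
    have "chain_m shift X sdist \<delta>' dvd c"
      unfolding c_def using y1(4) mL by simp
    then have "chain_m shift X sdist \<delta> dvd c"
      using chain_m_mono[of \<delta>' \<delta>] dvd_trans by (metis \<delta>'_def min.cobounded1)
    moreover have "is_chain shift X sdist \<delta> y5 c" using chain_mono[OF y5(1)] by (simp add: \<delta>'_def)
    moreover have "y5 0 = a" using y5 y1 by (simp add: y4_def)
    ultimately show "chain_rel_delta shift X sdist \<delta> a z"
      unfolding chain_rel_delta_def using y5(3) by blast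
  qed
  then show ?thesis using a z by auto
qed



definition agr2 :: "nat \<Rightarrow> (nat \<Rightarrow> nat \<Rightarrow> 'a) \<Rightarrow> (nat \<Rightarrow> nat \<Rightarrow> 'a) \<Rightarrow> bool" where
  "agr2 M x y \<longleftrightarrow> (\<forall>n<M. agr M (x n) (y n))"

lemma agr2_trans: "agr2 M a b \<Longrightarrow> agr2 M b c \<Longrightarrow> agr2 M a c"
  by (auto simp: agr2_def agr_def)
lemma agr2_sym: "agr2 M a b \<Longrightarrow> agr2 M b a"
  by (auto simp: agr2_def agr_def)
lemma agr2_mono: "agr2 M a b \<Longrightarrow> N \<le> M \<Longrightarrow> agr2 N a b"
  by (auto simp: agr2_def agr_def)

lemma lebesgue_lemma:
  fixes m :: "'x \<Rightarrow> nat"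
  assumes cpt: "compact_space T"
    and op: "\<forall>u\<in>topspace T. openin T {y \<in> topspace T. R (m u) y u}"
    and refl: "\<forall>M u. R M u u"
    and sym: "\<forall>M a b. R M a b \<longrightarrow> R M b a"
    and trans: "\<forall>M a b c. R M a b \<longrightarrow> R M b c \<longrightarrow> R M a c"
    and mono: "\<forall>M N a b. R M a b \<longrightarrow> N \<le> M \<longrightarrow> R N a b"
  shows "\<exists>M0. \<forall>x\<in>topspace T. \<forall>y\<in>topspace T. R M0 x y \<longrightarrow>
            (\<exists>u\<in>topspace T. R (m u) x u \<and> R (m u) y u)"
proof -
  define C where "C u = {y \<in> topspace T. R (m u) y u}" for u
  have "compactin T (topspace T)" using cpt by (simp add: compact_space_def)
  moreover have "\<forall>U\<in>C ` topspace T. openin T U" using op by (auto simp: C_def)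
  moreover have "topspace T \<subseteq> \<Union>(C ` topspace T)" using refl by (auto simp: C_def)
  ultimately obtain \<F> where F: "finite \<F>" "\<F> \<subseteq> C ` topspace T" "topspace T \<subseteq> \<Union>\<F>"
    using compactin_def[THEN iffD1, THEN conjunct2, rule_format, of T "topspace T" "C ` topspace T"] by blast
  then obtain F' where F': "F' \<subseteq> topspace T" "finite F'" "\<F> = C ` F'"
    by (meson finite_subset_image)
  define M0 where "M0 = (\<Sum>u\<in>F'. m u)"
  have "\<forall>x\<in>topspace T. \<forall>y\<in>topspace T. R M0 x y \<longrightarrow>
            (\<exists>u\<in>topspace T. R (m u) x u \<and> R (m u) y u)"
  proof (intro ballI impI)
    fix x y assume x: "x \<in> topspace T" and y: "y \<in> topspace T" and xy: "R M0 x y"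
    then obtain u where u: "u \<in> F'" "x \<in> C u" using F F' by auto
    have "m u \<le> M0" unfolding M0_def using u F' by (intro member_le_sum) auto
    then have "R (m u) x y" using mono xy by blast
    moreover have "R (m u) x u" using u by (simp add: C_def)
    ultimately have "R (m u) y u" using sym trans by blast
    then show "\<exists>u\<in>topspace T. R (m u) x u \<and> R (m u) y u"
      using u F' \<open>R (m u) x u\<close> by blast
  qed
  then show ?thesis by blast
qed

lemma open_cyl_shtop: "openin (shtop A) {y \<in> A. agr M y x}"
proof -
  have "{y \<in> A. agr M y x} = A \<inter> {y. agr M y x}" by auto
  then show ?thesis unfolding shtop_def using openin_subtopology_Int2[OF open_cyl] by metis
qed

lemma unif_cont:
  assumes cpt: "compact_space (shtop A)" and g: "continuous_map (shtop A) (shtop B) g"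
  shows "\<exists>M. \<forall>u\<in>A. \<forall>v\<in>A. agr M u v \<longrightarrow> agr N (g u) (g v)"
proof -
  have "\<forall>u\<in>A. \<exists>M. \<forall>v\<in>A. agr M v u \<longrightarrow> agr N (g v) (g u)"
  proof
    fix u assume u: "u \<in> A"
    have gu: "g u \<in> B" using continuous_map_image_subset_topspace[OF g] u by auto
    have "openin (shtop A) {x \<in> topspace (shtop A). g x \<in> {w \<in> B. agr N w (g u)}}"
      using g open_cyl_shtop unfolding continuous_map_def by blast
    then obtain W where W: "openin seqtop W" "{x \<in> A. g x \<in> {w \<in> B. agr N w (g u)}} = A \<inter> W"
      unfolding shtop_def openin_subtopology by auto
    have "u \<in> W" using W(2) u gu by (auto simp: agr_def)
    then obtain M where M: "{y. agr M y u} \<subseteq> W" using open_cylE[OF W(1)] by blast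
    have "\<forall>v\<in>A. agr M v u \<longrightarrow> agr N (g v) (g u)"
    proof (intro ballI impI)
      fix v assume "v \<in> A" "agr M v u"
      then have "v \<in> A \<inter> W" using M by auto
      then show "agr N (g v) (g u)" using W(2) by blast
    qed
    then show "\<exists>M. \<forall>v\<in>A. agr M v u \<longrightarrow> agr N (g v) (g u)" by blast
  qed
  then obtain m where m: "\<forall>u\<in>A. \<forall>v\<in>A. agr (m u) v u \<longrightarrow> agr N (g v) (g u)"
    by metis
  obtain M0 where M0: "\<forall>x\<in>A. \<forall>y\<in>A. agr M0 x y \<longrightarrow> (\<exists>u\<in>A. agr (m u) x u \<and> agr (m u) y u)"
  proof -
    have op: "\<forall>u\<in>topspace (shtop A). openin (shtop A) {y \<in> topspace (shtop A). agr (m u) y u}"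
      using open_cyl_shtop[of A] topspace_shtop[of A] by metis
    have r: "\<forall>M u. agr M u u" by (simp add: agr_def)
    have s: "\<forall>M a b. agr M a b \<longrightarrow> agr M b a" using agr_sym by blast
    have t: "\<forall>M a b c. agr M a b \<longrightarrow> agr M b c \<longrightarrow> agr M a c" using agr_trans by blast
    have mo: "\<forall>M N a b. agr M a b \<longrightarrow> N \<le> M \<longrightarrow> agr N a b" using agr_mono by blast
    show ?thesis using lebesgue_lemma[OF cpt op r s t mo] that by auto
  qed
  show ?thesis
  proof (intro exI ballI impI)
    fix u v assume "u \<in> A" "v \<in> A" "agr M0 u v"
    then obtain w where "w \<in> A" "agr (m w) u w" "agr (m w) v w" using M0 by blast
    then have "agr N (g u) (g w)" "agr N (g v) (g w)" using m \<open>u \<in> A\<close> \<open>v \<in> A\<close> by auto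
    then show "agr N (g u) (g v)" using agr_sym agr_trans by metis
  qed
qed



lemma topspace_PT: "topspace (product_topology (\<lambda>n. shtop (Xs n)) UNIV) = {x. \<forall>n. x n \<in> Xs n}"
  by (auto simp: PiE_def extensional_def)

lemma PT_openE:
  assumes "openin (product_topology (\<lambda>n. shtop (Xs n)) UNIV) V" "x \<in> V"
  shows "\<exists>M. \<forall>y \<in> topspace (product_topology (\<lambda>n. shtop (Xs n)) UNIV). agr2 M y x \<longrightarrow> y \<in> V"
proof -
  obtain U where U: "x \<in> PiE UNIV U" "\<forall>n. openin (shtop (Xs n)) (U n)"
     "finite {n. U n \<noteq> topspace (shtop (Xs n))}" "PiE UNIV U \<subseteq> V"
    using product_topology_open_contains_basis[OF assms] by blast
  have "\<forall>n. \<exists>M. \<forall>y \<in> Xs n. agr M y (x n) \<longrightarrow> y \<in> U n"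
  proof
    fix n
    obtain W where W0: "openin seqtop W" "U n = W \<inter> Xs n"
      using U(2) unfolding shtop_def openin_subtopology by blast
    then have W: "openin seqtop W" "U n = Xs n \<inter> W" by auto
    have "x n \<in> W" using U(1) W(2) by auto
    then obtain M where "{y. agr M y (x n)} \<subseteq> W" using open_cylE[OF W(1)] by blast
    then show "\<exists>M. \<forall>y \<in> Xs n. agr M y (x n) \<longrightarrow> y \<in> U n" using W(2) by blast
  qed
  from choice[OF this] obtain m where m: "\<forall>n. \<forall>y \<in> Xs n. agr (m n) y (x n) \<longrightarrow> y \<in> U n" by blast
  define I0 where "I0 = {n. U n \<noteq> Xs n}"
  have "finite I0" using U(3) by (simp add: I0_def)
  then obtain B where B: "I0 \<subseteq> {..<B}" using finite_nat_bounded by blast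
  define M where "M = (\<Sum>n\<in>I0. m n) + B"
  have "\<forall>y \<in> topspace (product_topology (\<lambda>n. shtop (Xs n)) UNIV). agr2 M y x \<longrightarrow> y \<in> V"
  proof (intro ballI impI)
    fix y assume y: "y \<in> topspace (product_topology (\<lambda>n. shtop (Xs n)) UNIV)" and yx: "agr2 M y x"
    have "y n \<in> U n" for n
    proof (cases "n \<in> I0")
      case True
      then have "n < M" using B by (auto simp: M_def)
      then have "agr M (y n) (x n)" using yx by (simp add: agr2_def)
      moreover have "m n \<le> M" unfolding M_def using True \<open>finite I0\<close>
        using member_le_sum[of n I0 m] by simp
      ultimately have "agr (m n) (y n) (x n)" using agr_mono by blast
      moreover have "y n \<in> Xs n" using y by (auto simp: PiE_def)
      ultimately show ?thesis using m by blast
    next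
      case False
      then have "U n = Xs n" by (simp add: I0_def)
      moreover have "y n \<in> Xs n" using y by (auto simp: PiE_def)
      ultimately show ?thesis by simp
    qed
    then have "y \<in> PiE UNIV U" by (auto simp: PiE_def extensional_def)
    then show "y \<in> V" using U(4) by blast
  qed
  then show ?thesis by blast
qed

lemma PT_open_cyl:
  "openin (product_topology (\<lambda>n. shtop (Xs n)) UNIV)
     {y \<in> topspace (product_topology (\<lambda>n. shtop (Xs n)) UNIV). agr2 M y x}"
proof -
  have eq: "{y \<in> topspace (product_topology (\<lambda>n. shtop (Xs n)) UNIV). agr2 M y x}
     = PiE UNIV (\<lambda>n. if n < M then {w \<in> Xs n. agr M w (x n)} else Xs n)"
  proof (rule set_eqI)
    fix y
    have h: "\<And>n. y n \<in> (if n < M then {w \<in> Xs n. agr M w (x n)} else Xs n) \<longleftrightarrow> y n \<in> Xs n \<and> (n < M \<longrightarrow> agr M (y n) (x n))"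
      by auto
    have "y \<in> PiE UNIV (\<lambda>n. if n < M then {w \<in> Xs n. agr M w (x n)} else Xs n) \<longleftrightarrow> (\<forall>n. y n \<in> Xs n \<and> (n < M \<longrightarrow> agr M (y n) (x n)))"
      by (simp only: PiE_iff h extensional_UNIV) simp
    then show "y \<in> {y \<in> topspace (product_topology (\<lambda>n. shtop (Xs n)) UNIV). agr2 M y x} \<longleftrightarrow> y \<in> PiE UNIV (\<lambda>n. if n < M then {w \<in> Xs n. agr M w (x n)} else Xs n)"
      by (auto simp: PiE_iff agr2_def)
  qed
  show ?thesis unfolding eq
  proof (rule product_topology_basis)
    fix n show "openin (shtop (Xs n)) (if n < M then {w \<in> Xs n. agr M w (x n)} else Xs n)"
      using open_cyl_shtop[of "Xs n" M "x n"] openin_topspace[of "shtop (Xs n)"] by auto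
  next
    show "finite {n. (if n < M then {w \<in> Xs n. agr M w (x n)} else Xs n) \<noteq> topspace (shtop (Xs n))}"
      by (rule finite_subset[of _ "{..<M}"]) auto
  qed
qed

lemma inv_lim_sub: "inv_lim \<pi> Xs \<subseteq> topspace (product_topology (\<lambda>n. shtop (Xs n)) UNIV)"
proof
  fix x assume "x \<in> inv_lim \<pi> Xs"
  then have "\<forall>n. x n \<in> Xs n" by (simp add: inv_lim_def)
  then show "x \<in> topspace (product_topology (\<lambda>n. shtop (Xs n)) UNIV)" by (simp add: PiE_iff)
qed

lemma topspace_lim_top [simp]: "topspace (lim_top \<pi> Xs) = inv_lim \<pi> Xs"
  unfolding lim_top_def topspace_subtopology using inv_lim_sub[of \<pi> Xs] by blast

lemma lim_top_open_cyl: "openin (lim_top \<pi> Xs) {y \<in> inv_lim \<pi> Xs. agr2 M y x}"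
proof -
  have "{y \<in> inv_lim \<pi> Xs. agr2 M y x} = inv_lim \<pi> Xs \<inter>
     {y \<in> topspace (product_topology (\<lambda>n. shtop (Xs n)) UNIV). agr2 M y x}"
    using inv_lim_sub[of \<pi> Xs] by blast
  then show ?thesis unfolding lim_top_def by (simp only: openin_subtopology_Int2[OF PT_open_cyl])
qed

lemma seqtop_Hausdorff: "Hausdorff_space seqtop"
  unfolding seqtop_def Hausdorff_space_product_topology by simp

lemma lim_top_compact:
  assumes sft: "\<And>n. \<exists>S N F. finite S \<and> Xs n = sft_set S N F"
    and cont: "\<And>n. continuous_map (shtop (Xs (Suc n))) (shtop (Xs n)) (\<pi> n)"
  shows "compact_space (lim_top \<pi> Xs)"
proof -
  let ?P = "product_topology (\<lambda>n. shtop (Xs n)) UNIV"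
  have cn: "compact_space (shtop (Xs n))" for n
  proof -
    obtain S N F where "finite S" "Xs n = sft_set S N F" using sft by blast
    then have "compactin seqtop (Xs n)" using sft_compact by simp
    then show ?thesis unfolding shtop_def by (rule compact_space_subtopology)
  qed
  have cP: "compact_space ?P" unfolding compact_space_product_topology using cn by blast
  have eq: "inv_lim \<pi> Xs = (\<Inter>n\<in>UNIV. {x \<in> topspace ?P. \<pi> n (x (Suc n)) = x n})"
  proof (rule set_eqI)
    fix x
    show "x \<in> inv_lim \<pi> Xs \<longleftrightarrow> x \<in> (\<Inter>n\<in>UNIV. {x \<in> topspace ?P. \<pi> n (x (Suc n)) = x n})"
      unfolding inv_lim_def by (simp add: PiE_iff)
  qed
  have "closedin ?P {x \<in> topspace ?P. \<pi> n (x (Suc n)) = x n}" for n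
  proof (rule closedin_continuous_maps_eq)
    show "Hausdorff_space (shtop (Xs n))" unfolding shtop_def
      by (rule Hausdorff_space_subtopology[OF seqtop_Hausdorff])
    show "continuous_map ?P (shtop (Xs n)) (\<lambda>x. \<pi> n (x (Suc n)))"
    proof -
      have "continuous_map ?P (shtop (Xs (Suc n))) (\<lambda>x. x (Suc n))"
        by (rule continuous_map_product_projection) simp
      from continuous_map_compose[OF this cont[of n]] show ?thesis by (simp add: comp_def)
    qed
    show "continuous_map ?P (shtop (Xs n)) (\<lambda>x. x n)"
      by (rule continuous_map_product_projection) simp
  qed
  then have "closedin ?P (inv_lim \<pi> Xs)" unfolding eq by (intro closedin_INT[of UNIV]) blast+
  then have "compactin ?P (inv_lim \<pi> Xs)" using cP closedin_compact_space by blast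
  then show ?thesis unfolding lim_top_def by (rule compact_space_subtopology)
qed



lemma metric_A:
  assumes metric: "Metric_space (inv_lim \<pi> Xs) d"
    and compat: "Metric_space.mtopology (inv_lim \<pi> Xs) d = lim_top \<pi> Xs"
    and cpt: "compact_space (lim_top \<pi> Xs)" and eps: "\<epsilon> > 0"
  shows "\<exists>N. \<forall>x\<in>inv_lim \<pi> Xs. \<forall>y\<in>inv_lim \<pi> Xs. agr2 N x y \<longrightarrow> d x y < \<epsilon>"
proof -
  interpret Metric_space "inv_lim \<pi> Xs" d by (rule metric)
  let ?P = "product_topology (\<lambda>n. shtop (Xs n)) UNIV"
  have "\<forall>u\<in>inv_lim \<pi> Xs. \<exists>M. \<forall>y\<in>inv_lim \<pi> Xs. agr2 M y u \<longrightarrow> d u y < \<epsilon>/2"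
  proof
    fix u assume u: "u \<in> inv_lim \<pi> Xs"
    have "openin (lim_top \<pi> Xs) (mball u (\<epsilon>/2))" using compat openin_mball by metis
    then obtain V where V: "openin ?P V" "mball u (\<epsilon>/2) = V \<inter> inv_lim \<pi> Xs"
      unfolding lim_top_def openin_subtopology by blast
    have "u \<in> mball u (\<epsilon>/2)" using u eps by simp
    then have "u \<in> V" using V(2) by blast
    then obtain M where M: "\<forall>y \<in> topspace ?P. agr2 M y u \<longrightarrow> y \<in> V"
      using PT_openE[OF V(1)] by blast
    have "\<forall>y\<in>inv_lim \<pi> Xs. agr2 M y u \<longrightarrow> d u y < \<epsilon>/2"
    proof (intro ballI impI)
      fix y assume y: "y \<in> inv_lim \<pi> Xs" "agr2 M y u"
      then have "y \<in> V" using M inv_lim_sub by blast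
      then have "y \<in> mball u (\<epsilon>/2)" using V(2) y by blast
      then show "d u y < \<epsilon>/2" by simp
    qed
    then show "\<exists>M. \<forall>y\<in>inv_lim \<pi> Xs. agr2 M y u \<longrightarrow> d u y < \<epsilon>/2" by blast
  qed
  then obtain m where m: "\<forall>u\<in>inv_lim \<pi> Xs. \<forall>y\<in>inv_lim \<pi> Xs. agr2 (m u) y u \<longrightarrow> d u y < \<epsilon>/2"
    by metis
  have op: "\<forall>u\<in>topspace (lim_top \<pi> Xs). openin (lim_top \<pi> Xs) {y \<in> topspace (lim_top \<pi> Xs). agr2 (m u) y u}"
    using lim_top_open_cyl[of \<pi> Xs] topspace_lim_top[of \<pi> Xs] by metis
  have r: "\<forall>M u. agr2 M u u" by (simp add: agr2_def agr_def)
  have s: "\<forall>M a b. agr2 M a b \<longrightarrow> agr2 M b a" using agr2_sym by blast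
  have t: "\<forall>M a b c. agr2 M a b \<longrightarrow> agr2 M b c \<longrightarrow> agr2 M a c" using agr2_trans by blast
  have mo: "\<forall>M N a b. agr2 M a b \<longrightarrow> N \<le> M \<longrightarrow> agr2 N a b" using agr2_mono by blast
  obtain M0 where M0: "\<forall>x\<in>inv_lim \<pi> Xs. \<forall>y\<in>inv_lim \<pi> Xs. agr2 M0 x y \<longrightarrow>
            (\<exists>u\<in>inv_lim \<pi> Xs. agr2 (m u) x u \<and> agr2 (m u) y u)"
    using lebesgue_lemma[OF cpt op r s t mo] by auto
  show ?thesis
  proof (intro exI ballI impI)
    fix x y assume x: "x \<in> inv_lim \<pi> Xs" and y: "y \<in> inv_lim \<pi> Xs" and xy: "agr2 M0 x y"
    then obtain u where u: "u \<in> inv_lim \<pi> Xs" "agr2 (m u) x u" "agr2 (m u) y u" using M0 by blast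
    have "d u x < \<epsilon>/2" "d u y < \<epsilon>/2" using m u x y by auto
    moreover have "d x y \<le> d x u + d u y" using triangle x y u by blast
    moreover have "d x u = d u x" using commute by blast
    ultimately show "d x y < \<epsilon>" by linarith
  qed
qed

lemma metric_B:
  assumes metric: "Metric_space (inv_lim \<pi> Xs) d"
    and compat: "Metric_space.mtopology (inv_lim \<pi> Xs) d = lim_top \<pi> Xs"
    and cpt: "compact_space (lim_top \<pi> Xs)"
  shows "\<exists>\<delta>>0. \<forall>a\<in>inv_lim \<pi> Xs. \<forall>b\<in>inv_lim \<pi> Xs. d a b \<le> \<delta> \<longrightarrow> agr2 M a b"
proof (cases "inv_lim \<pi> Xs = {}")
  case True then show ?thesis by (intro exI[of _ 1]) auto
next
  case False
  interpret Metric_space "inv_lim \<pi> Xs" d by (rule metric)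
  have "\<forall>u\<in>inv_lim \<pi> Xs. \<exists>r>0. mball u r \<subseteq> {y \<in> inv_lim \<pi> Xs. agr2 M y u}"
  proof
    fix u assume u: "u \<in> inv_lim \<pi> Xs"
    have "openin mtopology {y \<in> inv_lim \<pi> Xs. agr2 M y u}" using compat lim_top_open_cyl by metis
    moreover have "u \<in> {y \<in> inv_lim \<pi> Xs. agr2 M y u}" using u by (simp add: agr2_def agr_def)
    ultimately show "\<exists>r>0. mball u r \<subseteq> {y \<in> inv_lim \<pi> Xs. agr2 M y u}"
      unfolding openin_mtopology by blast
  qed
  then obtain r where r: "\<forall>u\<in>inv_lim \<pi> Xs. r u > 0 \<and> mball u (r u) \<subseteq> {y \<in> inv_lim \<pi> Xs. agr2 M y u}"
    by metis
  have "compactin mtopology (inv_lim \<pi> Xs)"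
    using cpt compat by (metis compact_space_def topspace_mtopology)
  moreover have "\<forall>U\<in>(\<lambda>u. mball u (r u / 2)) ` inv_lim \<pi> Xs. openin mtopology U" by blast
  moreover have "inv_lim \<pi> Xs \<subseteq> \<Union>((\<lambda>u. mball u (r u / 2)) ` inv_lim \<pi> Xs)"
  proof
    fix x assume "x \<in> inv_lim \<pi> Xs"
    then have "x \<in> mball x (r x / 2)" using r by simp
    then show "x \<in> \<Union>((\<lambda>u. mball u (r u / 2)) ` inv_lim \<pi> Xs)" using \<open>x \<in> inv_lim \<pi> Xs\<close> by blast
  qed
  ultimately obtain \<F> where F: "finite \<F>" "\<F> \<subseteq> (\<lambda>u. mball u (r u / 2)) ` inv_lim \<pi> Xs"
      "inv_lim \<pi> Xs \<subseteq> \<Union>\<F>"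
    using compactin_def[THEN iffD1, THEN conjunct2, rule_format,
        of mtopology "inv_lim \<pi> Xs" "(\<lambda>u. mball u (r u / 2)) ` inv_lim \<pi> Xs"] by blast
  then obtain F' where F': "F' \<subseteq> inv_lim \<pi> Xs" "finite F'" "\<F> = (\<lambda>u. mball u (r u / 2)) ` F'"
    by (meson finite_subset_image)
  have "F' \<noteq> {}" using F(3) F'(3) False by auto
  define \<delta> where "\<delta> = Min ((\<lambda>u. r u / 2) ` F')"
  have dpos: "\<delta> > 0" unfolding \<delta>_def using F' \<open>F' \<noteq> {}\<close> r by (auto simp: Min_gr_iff)
  have "\<forall>a\<in>inv_lim \<pi> Xs. \<forall>b\<in>inv_lim \<pi> Xs. d a b \<le> \<delta> \<longrightarrow> agr2 M a b"
  proof (intro ballI impI)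
    fix a b assume a: "a \<in> inv_lim \<pi> Xs" and b: "b \<in> inv_lim \<pi> Xs" and ab: "d a b \<le> \<delta>"
    obtain u where u: "u \<in> F'" "a \<in> mball u (r u / 2)" using F(3) F'(3) a by auto
    have uI: "u \<in> inv_lim \<pi> Xs" using u F' by auto
    have "\<delta> \<le> r u / 2" unfolding \<delta>_def using u F' by (intro Min_le) auto
    have "d u a < r u / 2" using u by simp
    moreover have "d u b \<le> d u a + d a b" using triangle uI a b by blast
    ultimately have "d u b < r u" using ab \<open>\<delta> \<le> r u / 2\<close> by linarith
    then have "b \<in> mball u (r u)" using uI b by simp
    moreover have "a \<in> mball u (r u)" using u uI a r by auto
    ultimately have "agr2 M a u" "agr2 M b u" using r uI by blast+
    then show "agr2 M a b" using agr2_sym agr2_trans by blast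
  qed
  then show ?thesis using dpos by blast
qed



primrec pic :: "(nat \<Rightarrow> 'b \<Rightarrow> 'b) \<Rightarrow> nat \<Rightarrow> nat \<Rightarrow> 'b \<Rightarrow> 'b" where
  "pic p n 0 u = u"
| "pic p n (Suc j) u = p n (pic p (Suc n) j u)"

lemma pic_cont:
  assumes cont: "\<And>n. continuous_map (shtop (Xs (Suc n))) (shtop (Xs n)) (\<pi> n)"
  shows "continuous_map (shtop (Xs (n+j))) (shtop (Xs n)) (pic \<pi> n j)"
proof (induction j arbitrary: n)
  case 0
  have "pic \<pi> n 0 = id" by (simp add: fun_eq_iff)
  then show ?case by simp
next
  case (Suc j)
  have e: "pic \<pi> n (Suc j) = \<pi> n \<circ> pic \<pi> (Suc n) j" by (simp add: fun_eq_iff)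
  have "continuous_map (shtop (Xs (Suc n + j))) (shtop (Xs (Suc n))) (pic \<pi> (Suc n) j)" by (rule Suc.IH)
  then have "continuous_map (shtop (Xs (n + Suc j))) (shtop (Xs n)) (\<pi> n \<circ> pic \<pi> (Suc n) j)"
    using continuous_map_compose cont[of n] by simp
  then show ?case unfolding e by (simp add: comp_def)
qed

lemma cont_mem: "continuous_map (shtop A) (shtop B) g \<Longrightarrow> u \<in> A \<Longrightarrow> g u \<in> B"
  using continuous_map_image_subset_topspace by fastforce

lemma pic_equiv:
  assumes cont: "\<And>n. continuous_map (shtop (Xs (Suc n))) (shtop (Xs n)) (\<pi> n)"
    and equiv: "\<And>n x. x \<in> Xs (Suc n) \<Longrightarrow> shift (\<pi> n x) = \<pi> n (shift x)"
    and sh: "\<And>n x. x \<in> Xs n \<Longrightarrow> shift x \<in> Xs n"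
  shows "u \<in> Xs (n+j) \<Longrightarrow> pic \<pi> n j (shift u) = shift (pic \<pi> n j u)"
proof (induction j arbitrary: n)
  case 0 then show ?case by simp
next
  case (Suc j)
  have u: "u \<in> Xs (Suc n + j)" using Suc.prems by simp
  have "pic \<pi> (Suc n) j u \<in> Xs (Suc n)" using cont_mem[OF pic_cont[of Xs \<pi>, OF cont] u] .
  then show ?case using Suc.IH[OF u] equiv by simp
qed

lemma pic_inv:
  assumes "\<forall>n. \<pi> n (x (Suc n)) = x n"
  shows "pic \<pi> n j (x (n+j)) = x n"
proof (induction j arbitrary: n)
  case (Suc j)
  have "pic \<pi> (Suc n) j (x (Suc n + j)) = x (Suc n)" by (rule Suc.IH)
  then show ?case using assms by simp
qed simp

lemma ext_lemma:
  assumes mlc: "MLC1 \<pi> Ds" and comp: "\<And>n. \<pi> n ` Ds (Suc n) \<subseteq> Ds n"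
    and u: "u \<in> \<pi> m ` Ds (Suc m)"
  shows "\<exists>x. (\<forall>n. x n \<in> Ds n) \<and> (\<forall>n. \<pi> n (x (Suc n)) = x n) \<and> x m = u"
proof -
  define nxt where "nxt j v = (SOME w. w \<in> \<pi> (Suc (m+j)) ` Ds (Suc (Suc (m+j))) \<and> \<pi> (m+j) w = v)" for j v
  define c where "c = rec_nat u nxt"
  have c0: "c 0 = u" by (simp add: c_def)
  have cS: "c (Suc j) = nxt j (c j)" for j by (simp add: c_def)
  have P: "c j \<in> \<pi> (m+j) ` Ds (Suc (m+j)) \<and> (\<forall>i. j = Suc i \<longrightarrow> \<pi> (m+i) (c j) = c i)" for j
  proof (induction j)
    case 0 then show ?case using u c0 by simp
  next
    case (Suc j)
    have "c j \<in> \<pi> (m+j) ` (\<pi> (Suc (m+j)) ` Ds (Suc (Suc (m+j))))"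
    proof -
      have eq: "\<pi> (m+j) ` Ds (Suc (m+j)) = \<pi> (m+j) ` (\<pi> (Suc (m+j)) ` Ds (Suc (Suc (m+j))))"
        using spec[OF mlc[unfolded MLC1_def], of "m+j"] .
      have h1: "c j \<in> \<pi> (m+j) ` Ds (Suc (m+j))" using Suc.IH by (rule conjunct1)
      show ?thesis using h1 unfolding eq .
    qed
    then obtain w where w: "w \<in> \<pi> (Suc (m+j)) ` Ds (Suc (Suc (m+j)))" "c j = \<pi> (m+j) w"
      by (rule imageE)
    then have ex: "\<exists>w. w \<in> \<pi> (Suc (m+j)) ` Ds (Suc (Suc (m+j))) \<and> \<pi> (m+j) w = c j"
      by (intro exI[of _ w]) simp
    have "c (Suc j) \<in> \<pi> (Suc (m+j)) ` Ds (Suc (Suc (m+j))) \<and> \<pi> (m+j) (c (Suc j)) = c j"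
      unfolding cS nxt_def by (rule someI_ex[OF ex])
    then show ?case by simp
  qed
  have cD: "c j \<in> Ds (m+j)" for j
  proof -
    have "c j \<in> \<pi> (m+j) ` Ds (Suc (m+j))" using P[of j] by blast
    then show ?thesis using comp[of "m+j"] by blast
  qed
  have cc: "\<pi> (m+j) (c (Suc j)) = c j" for j using P[of "Suc j"] by simp
  define x where "x n = (if m \<le> n then c (n - m) else pic \<pi> n (m - n) u)" for n
  have uD: "u \<in> Ds m" using u comp[of m] by blast
  have picD: "v \<in> Ds (n+j) \<Longrightarrow> pic \<pi> n j v \<in> Ds n" for v n j
  proof (induction j arbitrary: n)
    case (Suc j)
    have "v \<in> Ds (Suc n + j)" using Suc.prems by simp
    then have "pic \<pi> (Suc n) j v \<in> Ds (Suc n)" by (rule Suc.IH)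
    then have "\<pi> n (pic \<pi> (Suc n) j v) \<in> Ds n" using comp[of n] by blast
    then show ?case by simp
  qed simp
  have "\<forall>n. x n \<in> Ds n"
  proof
    fix n show "x n \<in> Ds n"
    proof (cases "m \<le> n")
      case True then show ?thesis using cD[of "n-m"] by (simp add: x_def)
    next
      case False then show ?thesis using picD[of u n "m-n"] uD by (simp add: x_def)
    qed
  qed
  moreover have "\<forall>n. \<pi> n (x (Suc n)) = x n"
  proof
    fix n show "\<pi> n (x (Suc n)) = x n"
    proof (cases "m \<le> n")
      case True
      then have "Suc n - m = Suc (n - m)" by simp
      then show ?thesis using True cc[of "n-m"] by (simp add: x_def)
    next
      case False
      then have mn: "m - n = Suc (m - Suc n)" by simp
      show ?thesis
      proof (cases "m = Suc n")
        case True then show ?thesis using c0 by (simp add: x_def)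
      next
        case False
        then show ?thesis using \<open>\<not> m \<le> n\<close> mn by (simp add: x_def)
      qed
    qed
  qed
  moreover have "x m = u" using c0 by (simp add: x_def)
  ultimately show ?thesis by blast
qed

lemma lim_map_pow: "(lim_map ^^ i) x = (\<lambda>n. (shift ^^ i) (x n))"
  by (induction i) (auto simp: lim_map_def)

lemma lim_map_in:
  assumes equiv: "\<And>n x. x \<in> Xs (Suc n) \<Longrightarrow> shift (\<pi> n x) = \<pi> n (shift x)"
    and sh: "\<And>n x. x \<in> Xs n \<Longrightarrow> shift x \<in> Xs n"
  shows "x \<in> inv_lim \<pi> Xs \<Longrightarrow> lim_map x \<in> inv_lim \<pi> Xs"
proof -
  assume x: "x \<in> inv_lim \<pi> Xs"
  have "shift (x n) \<in> Xs n" for n using x sh by (simp add: inv_lim_def)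
  moreover have "\<pi> n (shift (x (Suc n))) = shift (x n)" for n
  proof -
    have "x (Suc n) \<in> Xs (Suc n)" "\<pi> n (x (Suc n)) = x n" using x by (auto simp: inv_lim_def)
    then show ?thesis using equiv[of "x (Suc n)" n] by simp
  qed
  ultimately show ?thesis by (simp add: inv_lim_def lim_map_def)
qed



theorem lemma5p2:
  fixes Xs :: "nat \<Rightarrow> (nat \<Rightarrow> 'a) set"
    and \<pi> :: "nat \<Rightarrow> (nat \<Rightarrow> 'a) \<Rightarrow> (nat \<Rightarrow> 'a)"
    and d :: "(nat \<Rightarrow> nat \<Rightarrow> 'a) \<Rightarrow> (nat \<Rightarrow> nat \<Rightarrow> 'a) \<Rightarrow> real"
    and Ds :: "nat \<Rightarrow> (nat \<Rightarrow> 'a) set"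
    and \<epsilon> :: real
  assumes sft: "\<And>n. transitive_sft (Xs n)"
    and cont: "\<And>n. continuous_map (shtop (Xs (Suc n))) (shtop (Xs n)) (\<pi> n)"
    and equiv: "\<And>n x. x \<in> Xs (Suc n) \<Longrightarrow> shift (\<pi> n x) = \<pi> n (shift x)"
    and mlc: "MLC1 \<pi> Xs"
    and metric: "Metric_space (inv_lim \<pi> Xs) d"
    and compat: "Metric_space.mtopology (inv_lim \<pi> Xs) d = lim_top \<pi> Xs"
    and Dclass: "\<And>n. Ds n \<in> chain_classes shift (Xs n) sdist"
    and Dcompat: "\<And>n. \<pi> n ` Ds (Suc n) \<subseteq> Ds n"
    and Dmlc: "MLC1 \<pi> Ds"
    and eps: "\<epsilon> > 0"
  shows "\<exists>\<delta>>0. \<forall>xs :: nat \<Rightarrow> (nat \<Rightarrow> nat \<Rightarrow> 'a).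
           (\<forall>i. xs i \<in> inv_lim \<pi> Xs) \<and> (\<forall>i. d (lim_map (xs i)) (xs (Suc i)) \<le> \<delta>) \<and>
           xs 0 \<in> {x \<in> inv_lim \<pi> Xs. \<forall>n. x n \<in> Ds n}
           \<longrightarrow> (\<exists>x \<in> {x \<in> inv_lim \<pi> Xs. \<forall>n. x n \<in> Ds n}.
                  \<forall>i. d ((lim_map ^^ i) x) (xs i) \<le> \<epsilon>)"
proof -
  let ?IL = "inv_lim \<pi> Xs"
  have sftn: "\<exists>S N F. finite S \<and> N > 0 \<and> Xs n = sft_set S N F" for n
    using sft[of n] unfolding transitive_sft_def is_sft_def by blast
  have sh: "\<And>n x. x \<in> Xs n \<Longrightarrow> shift x \<in> Xs n"
  proof -
    fix n x assume "x \<in> Xs n"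
    moreover obtain S N F where "Xs n = sft_set S N F" using sftn[of n] by blast
    ultimately show "shift x \<in> Xs n" using shift_sft by metis
  qed
  have cpt: "compact_space (lim_top \<pi> Xs)"
    by (rule lim_top_compact) (use sftn cont in blast)+
  obtain N where NA: "\<forall>x\<in>?IL. \<forall>y\<in>?IL. agr2 N x y \<longrightarrow> d x y < \<epsilon>"
    using metric_A[OF metric compat cpt eps] by blast
  define K where "K = Suc N"
  obtain SK WK FK where XK: "finite SK" "WK > 0" "Xs K = sft_set SK WK FK"
    using sftn[of K] by blast
  define G where "G n u = pic \<pi> n (N - n) (\<pi> N u)" for n u
  have Gcont: "continuous_map (shtop (Xs K)) (shtop (Xs n)) (G n)" if "n \<le> N" for n
  proof -
    have "continuous_map (shtop (Xs (n + (N - n)))) (shtop (Xs n)) (pic \<pi> n (N - n))"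
      by (rule pic_cont[of Xs \<pi>, OF cont])
    then have "continuous_map (shtop (Xs N)) (shtop (Xs n)) (pic \<pi> n (N - n))"
      using that by simp
    moreover have "G n = pic \<pi> n (N - n) \<circ> \<pi> N" by (simp add: fun_eq_iff G_def)
    ultimately show ?thesis using continuous_map_compose[OF cont[of N]] by (simp add: K_def)
  qed
  have cK: "compact_space (shtop (Xs K))"
    unfolding shtop_def XK(3) by (rule compact_space_subtopology[OF sft_compact[OF XK(1)]])
  have "\<forall>n. \<exists>M. n \<le> N \<longrightarrow> (\<forall>u\<in>Xs K. \<forall>v\<in>Xs K. agr M u v \<longrightarrow> agr N (G n u) (G n v))"
  proof
    fix n show "\<exists>M. n \<le> N \<longrightarrow> (\<forall>u\<in>Xs K. \<forall>v\<in>Xs K. agr M u v \<longrightarrow> agr N (G n u) (G n v))"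
    proof (cases "n \<le> N")
      case True
      then show ?thesis using unif_cont[OF cK Gcont[OF True], of N] by blast
    qed simp
  qed
  from choice[OF this] obtain mc where
    mc: "\<forall>n. n \<le> N \<longrightarrow> (\<forall>u\<in>Xs K. \<forall>v\<in>Xs K. agr (mc n) u v \<longrightarrow> agr N (G n u) (G n v))"
    by blast
  define Mc where "Mc = (\<Sum>n<N. mc n)"
  define M' where "M' = Mc + WK + K + 1"
  obtain \<delta> where dpos: "\<delta> > 0" and dB: "\<forall>a\<in>?IL. \<forall>b\<in>?IL. d a b \<le> \<delta> \<longrightarrow> agr2 M' a b"
    using metric_B[OF metric compat cpt, of M'] by blast
  show ?thesis
  proof (intro exI[of _ \<delta>] conjI allI impI)
    show "\<delta> > 0" by fact
  next
    fix xs :: "nat \<Rightarrow> (nat \<Rightarrow> nat \<Rightarrow> 'a)"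
    assume H: "(\<forall>i. xs i \<in> ?IL) \<and> (\<forall>i. d (lim_map (xs i)) (xs (Suc i)) \<le> \<delta>) \<and>
           xs 0 \<in> {x \<in> ?IL. \<forall>n. x n \<in> Ds n}"
    have xsIL: "xs i \<in> ?IL" for i using H by blast
    define a where "a i = xs i K" for i
    have aX: "a i \<in> Xs K" for i using xsIL[of i] by (simp add: a_def inv_lim_def)
    have step: "\<forall>u<c. \<forall>q<M'. a (Suc u) q = a u (Suc q)" for c
    proof (intro allI impI)
      fix u q assume "q < M'"
      have "lim_map (xs u) \<in> ?IL" using lim_map_in[of Xs \<pi>, OF equiv sh xsIL[of u]] by blast
      then have "agr2 M' (lim_map (xs u)) (xs (Suc u))" using dB H xsIL by blast
      moreover have "K < M'" by (simp add: M'_def)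
      ultimately have "agr M' (shift (xs u K)) (xs (Suc u) K)" by (simp add: agr2_def lim_map_def)
      then show "a (Suc u) q = a u (Suc q)" using \<open>q < M'\<close> by (simp add: agr_def a_def shift_def)
    qed
    define z where "z i = a i 0" for i
    have za: "z (i + r) = a i r" if "r \<le> M'" for i r
    proof -
      have "a (i + r) 0 = a i (0 + r)" by (rule chain_G[OF step[of "i + r"]]) (use that in auto)
      then show ?thesis by (simp add: z_def)
    qed
    have zX: "z \<in> Xs K"
      unfolding XK(3) sft_set_def
    proof (intro CollectI conjI allI)
      fix i show "z i \<in> SK" using aX[of i] XK(3) by (simp add: z_def sft_set_def)
    next
      fix i
      have "map z [i..<i+WK+1] = map (a i) [0..<0+WK+1]"
        by (rule nth_equalityI) (use za[of _ i] in \<open>auto simp del: upt_Suc simp: M'_def add.commute less_Suc_eq_le\<close>)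
      moreover have "a i \<in> sft_set SK WK FK" using aX XK(3) by auto
      ultimately show "map z [i..<i+WK+1] \<in> FK"
        unfolding sft_set_def by (metis (mono_tags, lifting) mem_Collect_eq)
    qed
    have a0D: "a 0 \<in> Ds K" using H by (simp add: a_def)
    have "agr WK z (a 0)" unfolding agr_def
    proof (intro allI impI)
      fix t assume "t < WK"
      then show "z t = a 0 t" using za[of t 0] by (simp add: M'_def)
    qed
    then have zD: "z \<in> Ds K"
      using chain_class_open[OF sft XK(3) Dclass a0D zX] by blast
    have "\<pi> N z \<in> \<pi> N ` Ds (Suc N)" using zD by (simp add: K_def)
    then obtain x where x: "\<forall>n. x n \<in> Ds n" "\<forall>n. \<pi> n (x (Suc n)) = x n" "x N = \<pi> N z"
      using ext_lemma[OF Dmlc Dcompat] by blast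
    have DX: "Ds n \<subseteq> Xs n" for n using Dclass[of n] by (auto simp: chain_classes_def)
    have xIL: "x \<in> ?IL" using x DX by (auto simp: inv_lim_def)
    have Gsh: "G n ((shift ^^ i) u) = (shift ^^ i) (G n u)" if "n \<le> N" "u \<in> Xs K" for n i u
    proof (induction i)
      case (Suc i)
      have ui: "(shift ^^ i) u \<in> Xs K" using funpow_shift_sft[of u SK WK FK i] that XK(3) by simp
      have "\<pi> N ((shift ^^ i) u) \<in> Xs N" using cont_mem[OF cont[of N]] ui by (simp add: K_def)
      then have m: "\<pi> N ((shift ^^ i) u) \<in> Xs (n + (N - n))" using that by simp
      have "G n ((shift ^^ Suc i) u) = pic \<pi> n (N - n) (\<pi> N (shift ((shift ^^ i) u)))"
        by (simp add: G_def)
      also have "\<dots> = pic \<pi> n (N - n) (shift (\<pi> N ((shift ^^ i) u)))"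
        using equiv[of "(shift ^^ i) u" N] ui by (simp add: K_def)
      also have "\<dots> = shift (G n ((shift ^^ i) u))"
        using pic_equiv[of Xs \<pi>, OF cont equiv sh m] by (simp add: G_def)
      finally show ?case using Suc.IH by simp
    qed simp
    have "\<forall>i. d ((lim_map ^^ i) x) (xs i) \<le> \<epsilon>"
    proof
      fix i
      have LIL: "(lim_map ^^ i) x \<in> ?IL"
      proof (induction i)
        case (Suc i) then show ?case using lim_map_in[of Xs \<pi>, OF equiv sh] by simp
      qed (use xIL in simp)
      have "agr2 N ((lim_map ^^ i) x) (xs i)"
        unfolding agr2_def
      proof (intro allI impI)
        fix n assume n: "n < N"
        have xn: "x n = G n z"
        proof -
          have "x n = pic \<pi> n (N - n) (x (n + (N - n)))" using pic_inv[of \<pi> x, OF x(2)] by simp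
          then show ?thesis using x(3) n by (simp add: G_def)
        qed
        have xsn: "xs i n = G n (a i)"
        proof -
          have c: "\<forall>n. \<pi> n (xs i (Suc n)) = xs i n" using xsIL[of i] by (simp add: inv_lim_def)
          have "xs i n = pic \<pi> n (N - n) (xs i (n + (N - n)))" using pic_inv[of \<pi> "xs i", OF c] by simp
          then show ?thesis using n c by (simp add: G_def a_def K_def)
        qed
        have zi: "(shift ^^ i) z \<in> Xs K" using funpow_shift_sft[of z SK WK FK i] zX XK(3) by simp
        have "agr (Suc M') ((shift ^^ i) z) (a i)"
          unfolding agr_def funpow_shift using za by (simp add: add.commute less_Suc_eq_le)
        moreover have "mc n \<le> Suc M'"
        proof -
          have "mc n \<le> Mc" unfolding Mc_def using n by (intro member_le_sum) auto
          then show ?thesis by (simp add: M'_def)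
        qed
        ultimately have "agr (mc n) ((shift ^^ i) z) (a i)" using agr_mono by blast
        then have "agr N (G n ((shift ^^ i) z)) (G n (a i))" using mc n zi aX by auto
        then have "agr N ((shift ^^ i) (x n)) (xs i n)"
          using Gsh[of n z i] n zX xn xsn by simp
        then show "agr N (((lim_map ^^ i) x) n) (xs i n)" by (simp add: lim_map_pow)
      qed
      then have "d ((lim_map ^^ i) x) (xs i) < \<epsilon>" using NA LIL xsIL by blast
      then show "d ((lim_map ^^ i) x) (xs i) \<le> \<epsilon>" by simp
    qed
    moreover have "x \<in> {x \<in> ?IL. \<forall>n. x n \<in> Ds n}" using xIL x by blast
    ultimately show "\<exists>x \<in> {x \<in> ?IL. \<forall>n. x n \<in> Ds n}. \<forall>i. d ((lim_map ^^ i) x) (xs i) \<le> \<epsilon>"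
      by blast
  qed
qed

end
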